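(* Consider the resource sharing problem and the Estimation phase of the ENE algorithm described in the context. Then $\mathbb P\left(\exists n:\hat N_n^j\ne N\right)=O\left(\exp(-j^{1.4})\right)$ as $j\to\infty$.
   Context: Model. $N$ agents share $M$ resources, with $N\gg M$. Time is slotted. At each time agent $n$ chooses one resource in $\{1,\dots,M\}$ (or, where specified, no resource). The load of an agent is the number of agents (including itself) accessing the same resource at the same time. Each agent $n$ and resource $m$ has a utility $U_{n,m,1}\in[0,U_{\max}]$, constant in time, drawn once independently from continuous distributions; the utility of agent $n$ on resource $m$ with load $\ell$ is $U_{n,m,\ell}=U_{n,m,1}/\ell$. An agent accessing a resource observes the reward equal to its utility plus noise $\nu$, where $\nu$ is zero-mean sub-Gaussian with variance proxy $b$, i.i.d. over time and agents. Estimation phase of the ENE algorithm. Time is divided into epochs $j=1,2,\dots$; epoch $j$ begins with an Estimation phase of $M+1$ blocks of $j$ time steps. In block $k\le M$ every agent accesses resource $k$ (load $N$), and agent $n$ sets $\hat U^j_{n,k,N}$ to be the average of all its rewards in block $k$ of the Estimation phase over epochs $1,\dots,j$. In block $M+1$, at each time step each agent independently accesses resource 1 with probability $1/2$ and otherwise no resource; $\bar r_n^{j,1,M+1}$ is the average of agent $n$'s rewards over all time steps of block $M+1$ in epochs $1,\dots,j$ in which it accessed resource 1. Agent $n$ estimates the number of agents by $\hat N_n^j=\frac{1}{\ln(1/2)}\ln\left(1-\frac{\bar r_n^{j,1,M+1}}{2\hat U^j_{n,1,N}}\right)$, rounded to the nearest integer (the estimate is counted as correct when this quantity lies strictly within $1/2$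 of $N$). *)

theory Defs
  imports "HOL-Probability.Probability" "HOL-Library.Landau_Symbols"
begin

definition subgaussian :: "'a measure \<Rightarrow> ('a \<Rightarrow> real) \<Rightarrow> real \<Rightarrow> bool" where
  "subgaussian P X b \<longleftrightarrow>
     (\<forall>l::real. integrable P (\<lambda>\<omega>. exp (l * X \<omega>)) \<and>
                (\<integral>\<omega>. exp (l * X \<omega>) \<partial>P) \<le> exp (l^2 * b / 2))"

text \<open>Noise nu n i k s: agent n, epoch i, block k (1..M+1) of the Estimation phase, step s (1..i).
  Access decision acc n i s: in block M+1 of epoch i at step s, agent n accesses resource 1.
  Agents are 1..N, resources 1..M, U n m is the single-load utility U_{n,m,1}.\<close>

text \<open>hat U^j_{n,k,N}: average of rewards of agent n in block k over epochs 1..j (load N).\<close>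
definition U_hat :: "nat \<Rightarrow> (nat \<Rightarrow> nat \<Rightarrow> real) \<Rightarrow> (nat \<Rightarrow> nat \<Rightarrow> nat \<Rightarrow> nat \<Rightarrow> 'a \<Rightarrow> real)
                     \<Rightarrow> nat \<Rightarrow> nat \<Rightarrow> nat \<Rightarrow> 'a \<Rightarrow> real" where
  "U_hat N U nu n k j \<omega> =
     (\<Sum>i\<in>{1..j}. \<Sum>s\<in>{1..i}. U n k / real N + nu n i k s \<omega>) / (\<Sum>i\<in>{1..j}. real i)"

definition load1 :: "nat \<Rightarrow> (nat \<Rightarrow> nat \<Rightarrow> nat \<Rightarrow> 'a \<Rightarrow> bool) \<Rightarrow> nat \<Rightarrow> nat \<Rightarrow> 'a \<Rightarrow> nat" where
  "load1 N acc i s \<omega> = card {n'\<in>{1..N}. acc n' i s \<omega>}"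

definition acc_steps :: "(nat \<Rightarrow> nat \<Rightarrow> nat \<Rightarrow> 'a \<Rightarrow> bool) \<Rightarrow> nat \<Rightarrow> nat \<Rightarrow> 'a \<Rightarrow> (nat \<times> nat) set" where
  "acc_steps acc n j \<omega> = (SIGMA i:{1..j}. {s\<in>{1..i}. acc n i s \<omega>})"

definition r_bar :: "nat \<Rightarrow> nat \<Rightarrow> (nat \<Rightarrow> nat \<Rightarrow> real) \<Rightarrow> (nat \<Rightarrow> nat \<Rightarrow> nat \<Rightarrow> nat \<Rightarrow> 'a \<Rightarrow> real)
                     \<Rightarrow> (nat \<Rightarrow> nat \<Rightarrow> nat \<Rightarrow> 'a \<Rightarrow> bool) \<Rightarrow> nat \<Rightarrow> nat \<Rightarrow> 'a \<Rightarrow> real" where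
  "r_bar N M U nu acc n j \<omega> =
     (\<Sum>(i,s)\<in>acc_steps acc n j \<omega>. U n 1 / real (load1 N acc i s \<omega>) + nu n i (Suc M) s \<omega>)
       / real (card (acc_steps acc n j \<omega>))"

definition N_arg :: "nat \<Rightarrow> nat \<Rightarrow> (nat \<Rightarrow> nat \<Rightarrow> real) \<Rightarrow> (nat \<Rightarrow> nat \<Rightarrow> nat \<Rightarrow> nat \<Rightarrow> 'a \<Rightarrow> real)
                     \<Rightarrow> (nat \<Rightarrow> nat \<Rightarrow> nat \<Rightarrow> 'a \<Rightarrow> bool) \<Rightarrow> nat \<Rightarrow> nat \<Rightarrow> 'a \<Rightarrow> real" where
  "N_arg N M U nu acc n j \<omega> = 1 - r_bar N M U nu acc n j \<omega> / (2 * U_hat N U nu n 1 j \<omega>)"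

definition N_est :: "nat \<Rightarrow> nat \<Rightarrow> (nat \<Rightarrow> nat \<Rightarrow> real) \<Rightarrow> (nat \<Rightarrow> nat \<Rightarrow> nat \<Rightarrow> nat \<Rightarrow> 'a \<Rightarrow> real)
                     \<Rightarrow> (nat \<Rightarrow> nat \<Rightarrow> nat \<Rightarrow> 'a \<Rightarrow> bool) \<Rightarrow> nat \<Rightarrow> nat \<Rightarrow> 'a \<Rightarrow> real" where
  "N_est N M U nu acc n j \<omega> = ln (N_arg N M U nu acc n j \<omega>) / ln (1/2)"

definition est_correct :: "nat \<Rightarrow> nat \<Rightarrow> (nat \<Rightarrow> nat \<Rightarrow> real) \<Rightarrow> (nat \<Rightarrow> nat \<Rightarrow> nat \<Rightarrow> nat \<Rightarrow> 'a \<Rightarrow> real)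
                     \<Rightarrow> (nat \<Rightarrow> nat \<Rightarrow> nat \<Rightarrow> 'a \<Rightarrow> bool) \<Rightarrow> nat \<Rightarrow> nat \<Rightarrow> 'a \<Rightarrow> bool" where
  "est_correct N M U nu acc n j \<omega> \<longleftrightarrow>
     0 < N_arg N M U nu acc n j \<omega> \<and> \<bar>N_est N M U nu acc n j \<omega> - real N\<bar> < 1/2"

end

theory Submission
  imports Defs "HOL-Real_Asymp.Real_Asymp"
begin


lemma subgaussian_mono:
  assumes "subgaussian M X b" "b \<le> B" shows "subgaussian M X B"
  using assms unfolding subgaussian_def
  by (meson exp_le_cancel_iff divide_right_mono mult_left_mono order_trans zero_le_power2 zero_le_numeral)

lemma (in prob_space) subg_sum_ge:
  assumes fin: "finite I" and ind: "indep_vars (\<lambda>_. borel) X I"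
    and sg: "\<And>i. i\<in>I \<Longrightarrow> subgaussian M (X i) B" and B: "B>0" and I: "I\<noteq>{}" and e: "\<epsilon>>0"
  shows "prob {x\<in>space M. (\<Sum>i\<in>I. X i x) \<ge> \<epsilon>} \<le> exp (-\<epsilon>\<^sup>2/(2*B*card I))"
proof -
  have cI: "card I > 0" using fin I by auto
  define l where "l = \<epsilon>/(B*card I)"
  have l: "l > 0" using e B cI by (simp add: l_def)
  have rv[measurable]: "\<And>i. i\<in>I \<Longrightarrow> X i \<in> borel_measurable M"
    using ind by (auto simp: indep_vars_def)
  have "ennreal (prob {x\<in>space M. (\<Sum>i\<in>I. X i x) \<ge> \<epsilon>}) = emeasure M {x\<in>space M. (\<Sum>i\<in>I. X i x) \<ge> \<epsilon>}"
    by (simp add: emeasure_eq_measure)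
  also have "\<dots> \<le> ennreal (exp (-l*\<epsilon>)) * (\<integral>\<^sup>+x. ennreal (exp (l * (\<Sum>i\<in>I. X i x))) * indicator (space M) x \<partial>M)"
    by (intro Chernoff_ineq_nn_integral_ge l) (auto simp: fin)
  also have "(\<integral>\<^sup>+x. ennreal (exp (l * (\<Sum>i\<in>I. X i x))) * indicator (space M) x \<partial>M) =
             (\<integral>\<^sup>+x. (\<Prod>i\<in>I. ennreal (exp (l * X i x))) \<partial>M)"
    by (intro nn_integral_cong)
       (simp_all add: sum_distrib_left exp_sum fin prod_ennreal)
  also have "\<dots> = (\<Prod>i\<in>I. \<integral>\<^sup>+x. ennreal (exp (l * X i x)) \<partial>M)"
    by (intro indep_vars_nn_integral fin indep_vars_compose2[OF ind]) auto
  also have "ennreal (exp (-l * \<epsilon>)) * \<dots> \<le>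
               ennreal (exp (-l * \<epsilon>)) * (\<Prod>i\<in>I. ennreal (exp (l\<^sup>2 * B / 2)))"
  proof (intro mult_left_mono prod_mono_ennreal)
    fix i assume i: "i \<in> I"
    have int: "integrable M (\<lambda>x. exp (l * X i x))" and le: "(\<integral>x. exp (l * X i x) \<partial>M) \<le> exp (l\<^sup>2 * B / 2)"
      using sg[OF i] unfolding subgaussian_def by auto
    have "(\<integral>\<^sup>+x. ennreal (exp (l * X i x)) \<partial>M) = ennreal (\<integral>x. exp (l * X i x) \<partial>M)"
      by (intro nn_integral_eq_integral int) auto
    also have "\<dots> \<le> ennreal (exp (l\<^sup>2 * B / 2))" using le by (simp add: ennreal_leI)
    finally show "(\<integral>\<^sup>+x. ennreal (exp (l * X i x)) \<partial>M) \<le> ennreal (exp (l\<^sup>2 * B / 2))" .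
  qed auto
  also have "\<dots> = ennreal (exp (-l*\<epsilon>) * (\<Prod>i\<in>I. exp (l\<^sup>2 * B / 2)))"
    by (simp add: ennreal_power ennreal_mult)
  also have "exp (-l*\<epsilon>) * (\<Prod>i\<in>I. exp (l\<^sup>2 * B / 2)) = exp (card I * (l\<^sup>2 * B / 2) - l * \<epsilon>)"
  proof -
    have "(\<Prod>i\<in>I. exp (l\<^sup>2 * B / 2)) = exp (card I * (l\<^sup>2 * B / 2))" by (simp only: prod_constant exp_of_nat_mult)
    thus ?thesis by (simp only: mult_exp_exp) (simp add: algebra_simps)
  qed
  also have "card I * (l\<^sup>2 * B / 2) - l * \<epsilon> = -\<epsilon>\<^sup>2/(2*B*card I)"
    using cI B by (simp add: l_def field_simps power2_eq_square)
  finally show ?thesis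
    by (subst (asm) ennreal_le_iff) simp_all
qed

lemma (in prob_space) subg_sum_abs:
  assumes fin: "finite I" and ind: "indep_vars (\<lambda>_. borel) X I"
    and sg: "\<And>i. i\<in>I \<Longrightarrow> subgaussian M (X i) B" and B: "B>0" and I: "I\<noteq>{}" and e: "\<epsilon>>0"
  shows "prob {x\<in>space M. \<bar>\<Sum>i\<in>I. X i x\<bar> \<ge> \<epsilon>} \<le> 2 * exp (-\<epsilon>\<^sup>2/(2*B*card I))"
proof -
  have rv[measurable]: "\<And>i. i\<in>I \<Longrightarrow> X i \<in> borel_measurable M"
    using ind by (auto simp: indep_vars_def)
  have ind': "indep_vars (\<lambda>_. borel) (\<lambda>i x. - X i x) I"
    by (intro indep_vars_compose2[OF ind]) auto
  have sg': "subgaussian M (\<lambda>x. - X i x) B" if "i\<in>I" for i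
  proof -
    have "integrable M (\<lambda>x. exp ((-l) * X i x)) \<and> (\<integral>x. exp ((-l) * X i x) \<partial>M) \<le> exp ((-l)\<^sup>2 * B / 2)" for l
      using sg[OF that] unfolding subgaussian_def by blast
    then show ?thesis unfolding subgaussian_def by simp
  qed
  have "{x\<in>space M. \<bar>\<Sum>i\<in>I. X i x\<bar> \<ge> \<epsilon>} =
        {x\<in>space M. (\<Sum>i\<in>I. X i x) \<ge> \<epsilon>} \<union> {x\<in>space M. (\<Sum>i\<in>I. - X i x) \<ge> \<epsilon>}"
    by (auto simp: sum_negf abs_if)
  moreover have "prob ({x\<in>space M. (\<Sum>i\<in>I. X i x) \<ge> \<epsilon>} \<union> {x\<in>space M. (\<Sum>i\<in>I. - X i x) \<ge> \<epsilon>}) \<le>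
        prob {x\<in>space M. (\<Sum>i\<in>I. X i x) \<ge> \<epsilon>} + prob {x\<in>space M. (\<Sum>i\<in>I. - X i x) \<ge> \<epsilon>}"
    by (intro measure_subadditive emeasure_finite) auto
  ultimately have "prob {x\<in>space M. \<bar>\<Sum>i\<in>I. X i x\<bar> \<ge> \<epsilon>} \<le>
        prob {x\<in>space M. (\<Sum>i\<in>I. X i x) \<ge> \<epsilon>} + prob {x\<in>space M. (\<Sum>i\<in>I. - X i x) \<ge> \<epsilon>}"
    by simp
  also have "\<dots> \<le> exp (-\<epsilon>\<^sup>2/(2*B*card I)) + exp (-\<epsilon>\<^sup>2/(2*B*card I))"
    by (intro add_mono subg_sum_ge[OF fin ind sg B I e] subg_sum_ge[OF fin ind' sg' B I e])
  finally show ?thesis by simp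
qed

lemma (in prob_space) indep_blocks:
  assumes ind: "indep_vars (\<lambda>_. borel) X UNIV" and dj: "disjoint_family_on K L"
    and g: "\<And>t. t \<in> L \<Longrightarrow> g t \<in> borel_measurable (PiM (K t) (\<lambda>_. borel))"
    and eq: "\<And>t x. t \<in> L \<Longrightarrow> x \<in> space M \<Longrightarrow> Y t x = g t (restrict (\<lambda>i. X i x) (K t))"
  shows "indep_vars (\<lambda>_. borel) Y L"
proof -
  have "indep_vars (\<lambda>_. borel) (\<lambda>t x. g t (restrict (\<lambda>i. X i x) (K t))) L"
    by (intro indep_vars_compose2[OF indep_vars_restrict[OF ind _ dj]] g) auto
  moreover have "indep_vars (\<lambda>_. borel) (\<lambda>t x. g t (restrict (\<lambda>i. X i x) (K t))) L \<longleftrightarrow> indep_vars (\<lambda>_. borel) Y L"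
    unfolding indep_vars_def2
  proof (intro conj_cong indep_sets_cong refl)
    show "(\<forall>i\<in>L. random_variable borel (\<lambda>x. g i (restrict (\<lambda>i. X i x) (K i)))) = (\<forall>i\<in>L. random_variable borel (Y i))"
      using eq by (auto cong: measurable_cong)
  next
    fix i assume "i \<in> L"
    then show "{(\<lambda>x. g i (restrict (\<lambda>i. X i x) (K i))) -` A \<inter> space M |A. A \<in> sets borel} = {Y i -` A \<inter> space M |A. A \<in> sets borel}"
      using eq by (auto simp: vimage_def)
  qed
  ultimately show ?thesis by blast
qed

lemma (in prob_space) hoeff_abs:
  fixes X :: "'b \<Rightarrow> 'a \<Rightarrow> real" and m \<epsilon> :: real
  assumes fin: "finite I" and I: "I \<noteq> {}" and ind: "indep_vars (\<lambda>_. borel) X I"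
    and bnd: "\<And>i. i\<in>I \<Longrightarrow> AE x in M. X i x \<in> {0..1}"
    and ex: "\<And>i. i\<in>I \<Longrightarrow> expectation (X i) = m" and e: "\<epsilon> > 0"
  shows "prob {x\<in>space M. \<bar>(\<Sum>i\<in>I. X i x) - card I * m\<bar> \<ge> \<epsilon>} \<le> 2 * exp (-2*\<epsilon>\<^sup>2 / card I)"
proof -
  interpret H: Hoeffding_ineq M I X "\<lambda>_. 0" "\<lambda>_. 1" "\<Sum>i\<in>I. expectation (X i)"
  proof unfold_locales
    show "finite I" by (rule fin)
    show "indep_vars (\<lambda>_. borel) X I" by (rule ind)
    show "\<And>i. i\<in>I \<Longrightarrow> AE x in M. X i x \<in> {0..1}" by (rule bnd)
  qed
  have pos: "(\<Sum>i\<in>I. (1-0::real)\<^sup>2) > 0" using fin I by (simp add: card_gt_0_iff)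
  have "prob {x\<in>space M. \<bar>(\<Sum>i\<in>I. X i x) - (\<Sum>i\<in>I. expectation (X i))\<bar> \<ge> \<epsilon>} \<le>
        2 * exp (-2*\<epsilon>\<^sup>2 / (\<Sum>i\<in>I. (1 - 0)\<^sup>2))"
    using H.Hoeffding_ineq_abs_ge[OF less_imp_le[OF e] pos] .
  moreover have "(\<Sum>i\<in>I. expectation (X i)) = card I * m" using ex by simp
  ultimately show ?thesis by simp
qed
lemma dist_pair_le: "dist (a::'a::metric_space, b::'b::metric_space) (c, d) \<le> dist a c + dist b d"
  by (simp add: dist_Pair_Pair sqrt_sum_squares_le_sum_abs[of "dist a c" "dist b d", simplified])

lemma det_cont:
  fixes u :: real and N :: nat
  assumes u: "u > 0" and N: "N \<ge> 1"
  defines "\<mu> \<equiv> (1 - (1/2)^N) / N"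
  shows "\<exists>\<delta>>0. \<forall>e1 e2 a d. \<bar>e1\<bar> < \<delta> \<longrightarrow> \<bar>e2\<bar> < \<delta> \<longrightarrow> \<bar>a - \<mu>\<bar> < \<delta> \<longrightarrow> \<bar>d - 1/2\<bar> < \<delta> \<longrightarrow>
     0 < 1 - ((u*a+e2)/d) / (2*(u/N+e1)) \<and> \<bar>ln (1 - ((u*a+e2)/d) / (2*(u/N+e1))) / ln (1/2) - N\<bar> < 1/2"
proof -
  define F where "F = (\<lambda>x::real\<times>real\<times>real\<times>real. 1 - ((u*fst (snd (snd x))+fst (snd x))/snd (snd (snd x))) / (2*(u/N+fst x)))"
  define G where "G = (\<lambda>x. ln (F x) / ln (1/2))"
  define x0 where "x0 = (0::real, 0::real, \<mu>, 1/2::real)"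
  have Nr: "real N > 0" using N by simp
  have F0: "F x0 = (1/2)^N"
    using Nr u by (simp add: F_def x0_def \<mu>_def field_simps)
  have G0: "G x0 = N"
    by (simp add: G_def F0 ln_realpow)
  have cF: "isCont F x0"
    unfolding F_def x0_def using Nr u by (intro continuous_intros) (auto simp: add_pos_pos)
  have cG: "isCont G x0"
    unfolding G_def using F0 by (intro continuous_intros cF) auto
  obtain d1 where d1: "d1 > 0" "\<And>x. dist x x0 < d1 \<Longrightarrow> dist (F x) (F x0) < (1/2)^N"
    using cF[unfolded continuous_at_eps_delta] by (metis zero_less_power zero_less_divide_1_iff zero_less_numeral)
  obtain d2 where d2: "d2 > 0" "\<And>x. dist x x0 < d2 \<Longrightarrow> dist (G x) (G x0) < 1/2"
    using cG[unfolded continuous_at_eps_delta] by (metis zero_less_divide_1_iff zero_less_numeral)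
  define \<delta> where "\<delta> = min d1 d2 / 4"
  have \<delta>: "\<delta> > 0" using d1 d2 by (simp add: \<delta>_def)
  show ?thesis
  proof (intro exI[of _ \<delta>] conjI \<delta> allI impI)
    fix e1 e2 a d :: real
    assume h: "\<bar>e1\<bar> < \<delta>" "\<bar>e2\<bar> < \<delta>" "\<bar>a - \<mu>\<bar> < \<delta>" "\<bar>d - 1/2\<bar> < \<delta>"
    define x where "x = (e1, e2, a, d)"
    have "dist x x0 \<le> dist e1 0 + (dist e2 0 + (dist a \<mu> + dist d (1/2)))"
      unfolding x_def x0_def
      by (meson add_left_mono dist_pair_le order_trans)
    also have "\<dots> < 4 * \<delta>" using h by (simp add: dist_real_def)
    finally have dx: "dist x x0 < min d1 d2" by (simp add: \<delta>_def)
    have Fx: "F x = 1 - ((u*a+e2)/d) / (2*(u/N+e1))" by (simp add: F_def x_def)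
    have "dist (F x) (F x0) < (1/2)^N" using d1 dx by simp
    hence pos: "0 < F x" using F0 by (simp add: dist_real_def abs_less_iff)
    have "dist (G x) (G x0) < 1/2" using d2 dx by simp
    hence "\<bar>G x - N\<bar> < 1/2" using G0 by (simp add: dist_real_def)
    thus "0 < 1 - ((u*a+e2)/d) / (2*(u/N+e1))" using pos Fx by simp
    show "\<bar>ln (1 - ((u*a+e2)/d) / (2*(u/N+e1))) / ln (1/2) - N\<bar> < 1/2"
      using \<open>\<bar>G x - N\<bar> < 1/2\<close> Fx by (simp add: G_def)
  qed
qed

lemma comb_sum:
  fixes A :: "nat set" and n :: nat
  assumes fin: "finite A" and n: "n \<in> A"
  shows "(\<Sum>S\<in>Pow A. of_bool (n \<in> S) / real (card S)) = (2 ^ card A - 1) / card A"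
proof -
  define f where "f m = (\<Sum>S\<in>Pow A. of_bool (m \<in> S) / real (card S))" for m
  have sym: "f m = f n" if m: "m \<in> A" for m
  proof -
    define t where "t x = (if x = m then n else if x = n then m else x)" for x
    have tt: "t (t x) = x" for x by (simp add: t_def)
    have injt: "inj t" by (metis injI tt)
    define h where "h S = t ` S" for S
    have hh: "h (h S) = S" for S by (simp add: h_def image_image tt)
    have tA: "t ` A \<subseteq> A" using m n by (auto simp: t_def)
    have bij: "bij_betw h (Pow A) (Pow A)"
      by (rule bij_betw_byWitness[of _ h]) (use tA in \<open>auto simp: h_def image_image tt\<close>)
    have "f n = (\<Sum>S\<in>Pow A. of_bool (n \<in> h S) / real (card (h S)))"
      unfolding f_def by (rule sum.reindex_bij_betw[OF bij, symmetric])
    also have "\<dots> = f m" unfolding f_def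
    proof (intro sum.cong refl)
      fix S assume "S \<in> Pow A"
      have "card (h S) = card S" unfolding h_def by (intro card_image inj_on_subset[OF injt]) auto
      moreover have "n \<in> h S \<longleftrightarrow> m \<in> S" unfolding h_def
        by (metis image_eqI imageE t_def tt)
      ultimately show "of_bool (n \<in> h S) / real (card (h S)) = of_bool (m \<in> S) / real (card S)" by simp
    qed
    finally show ?thesis by simp
  qed
  have "(\<Sum>m\<in>A. f m) = (\<Sum>S\<in>Pow A. (\<Sum>m\<in>A. of_bool (m \<in> S)) / real (card S))"
    unfolding f_def by (subst sum.swap) (simp add: sum_divide_distrib)
  also have "\<dots> = (\<Sum>S\<in>Pow A. of_bool (S \<noteq> {}))"
  proof (intro sum.cong refl)
    fix S assume S: "S \<in> Pow A"
    hence "(\<Sum>m\<in>A. of_bool (m \<in> S) :: real) = card S"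
      using fin by (subst sum_of_bool_eq) (auto simp: Int_absorb1 Int_def[symmetric])
    moreover have "finite S" using S fin finite_subset by auto
    ultimately show "(\<Sum>m\<in>A. of_bool (m \<in> S)) / real (card S) = of_bool (S \<noteq> {})" by auto
  qed
  also have "\<dots> = real (card (Pow A - {{}}))"
  proof -
    have "Pow A \<inter> {x. x \<noteq> {}} = Pow A - {{}}" by auto
    thus ?thesis using fin by (simp add: sum_of_bool_eq)
  qed
  also have "\<dots> = 2 ^ card A - 1"
    using fin by (simp add: card_Pow card_Diff_singleton)
  finally have "(\<Sum>m\<in>A. f m) = 2 ^ card A - 1" .
  moreover have "(\<Sum>m\<in>A. f m) = card A * f n" using sym by simp
  moreover have "card A > 0" using fin n by (auto simp: card_gt_0_iff)
  ultimately show ?thesis by (simp add: f_def field_simps)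
qed


lemma (in prob_space) exp_share:
  fixes Xb :: "'k \<Rightarrow> 'a \<Rightarrow> real" and acc :: "nat \<Rightarrow> 'a \<Rightarrow> bool" and key :: "nat \<Rightarrow> 'k"
  assumes ind: "indep_vars (\<lambda>_. borel) Xb UNIV" and inj: "inj key"
    and Xa: "\<And>m \<omega>. Xb (key m) \<omega> = of_bool (acc m \<omega>)"
    and half: "\<And>m. {\<omega>\<in>space M. acc m \<omega>} \<in> events \<and> prob {\<omega>\<in>space M. acc m \<omega>} = 1/2"
    and N: "N \<ge> 1" and n: "n \<in> {1..N}"
  shows "expectation (\<lambda>\<omega>. of_bool (acc n \<omega>) / real (card {m\<in>{1..N}. acc m \<omega>})) = (1 - (1/2)^N)/N"
proof -
  define A where "A = {1..N}"
  have finA: "finite A" and cardA: "card A = N" and Ane: "A \<noteq> {}" and nA: "n \<in> A"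
    using N n by (auto simp: A_def)
  define Y where "Y m = (\<lambda>\<omega>. of_bool (acc m \<omega>) :: real)" for m
  have indY: "indep_vars (\<lambda>_. borel) Y A"
  proof (rule indep_blocks[OF ind, where K="\<lambda>m. {key m}" and g="\<lambda>m f. f (key m)"])
    show "disjoint_family_on (\<lambda>m. {key m}) A"
      using inj by (auto simp: disjoint_family_on_def inj_eq)
    show "\<And>t. t \<in> A \<Longrightarrow> (\<lambda>f. f (key t)) \<in> borel_measurable (Pi\<^sub>M {key t} (\<lambda>_. borel))"
      by (rule measurable_component_singleton) simp
    show "\<And>t x. t \<in> A \<Longrightarrow> x \<in> space M \<Longrightarrow> Y t x = (\<lambda>i\<in>{key t}. Xb i x) (key t)"
      by (simp add: Y_def Xa)
  qed
  have Ymeas: "Y m \<in> borel_measurable M" if "m \<in> A" for m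
    using indY that by (auto simp: indep_vars_def)
  define E where "E S = {\<omega>\<in>space M. \<forall>m\<in>A. acc m \<omega> = (m \<in> S)}" for S :: "nat set"
  define B where "B S m = {if m \<in> S then 1 else 0::real}" for S :: "nat set" and m :: nat
  have EI: "E S = (\<Inter>m\<in>A. Y m -` B S m \<inter> space M)" for S
    using Ane by (auto simp: E_def B_def Y_def split: if_splits)
  have Ysets: "Y m -` B S m \<inter> space M \<in> events" if "m \<in> A" for m S
    using Ymeas[OF that] by (auto simp: B_def intro: measurable_sets)
  have Eev: "E S \<in> events" for S
    unfolding EI using Ane finA Ysets by (intro sets.finite_INT) auto
  have pY: "prob (Y m -` B S m \<inter> space M) = 1/2" for m S
  proof (cases "m \<in> S")
    case True
    hence "Y m -` B S m \<inter> space M = {\<omega>\<in>space M. acc m \<omega>}" by (auto simp: Y_def B_def)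
    thus ?thesis using half by simp
  next
    case False
    hence "Y m -` B S m \<inter> space M = space M - {\<omega>\<in>space M. acc m \<omega>}" by (auto simp: Y_def B_def)
    thus ?thesis using half[of m] prob_compl by simp
  qed
  have pE: "prob (E S) = (1/2)^N" for S
  proof -
    have "prob (E S) = (\<Prod>m\<in>A. prob (Y m -` B S m \<inter> space M))"
      unfolding EI by (rule indep_varsD_finite[OF indY Ane finA]) (simp add: B_def)
    also have "\<dots> = (1/2)^N" by (simp add: pY cardA)
    finally show ?thesis .
  qed
  define c where "c S = of_bool (n \<in> S) / real (card S)" for S :: "nat set"
  have pw: "of_bool (acc n \<omega>) / real (card {m\<in>{1..N}. acc m \<omega>}) = (\<Sum>S\<in>Pow A. c S * indicator (E S) \<omega>)"
    if \<omega>: "\<omega> \<in> space M" for \<omega>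
  proof -
    define S0 where "S0 = {m\<in>A. acc m \<omega>}"
    have ind_eq: "indicator (E S) \<omega> = (if S = S0 then 1 else 0 :: real)" if "S \<in> Pow A" for S
      using that \<omega> by (auto simp: E_def S0_def indicator_def)
    have "(\<Sum>S\<in>Pow A. c S * indicator (E S) \<omega>) = (\<Sum>S\<in>Pow A. if S = S0 then c S else 0)"
      by (intro sum.cong refl) (simp add: ind_eq)
    also have "\<dots> = c S0" using finA by (simp add: S0_def)
    also have "\<dots> = of_bool (acc n \<omega>) / real (card {m\<in>{1..N}. acc m \<omega>})"
      using nA by (simp add: c_def S0_def A_def)
    finally show ?thesis by simp
  qed
  have "expectation (\<lambda>\<omega>. of_bool (acc n \<omega>) / real (card {m\<in>{1..N}. acc m \<omega>})) =
        expectation (\<lambda>\<omega>. \<Sum>S\<in>Pow A. c S * indicator (E S) \<omega>)"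
    by (rule Bochner_Integration.integral_cong) (simp_all only: pw)
  also have "\<dots> = (\<Sum>S\<in>Pow A. c S * prob (E S))"
  proof -
    have "expectation (\<lambda>\<omega>. \<Sum>S\<in>Pow A. c S * indicator (E S) \<omega>) = (\<Sum>S\<in>Pow A. expectation (\<lambda>\<omega>. c S * indicator (E S) \<omega>))"
      by (rule Bochner_Integration.integral_sum) (auto intro!: integrable_mult_right integrable_real_indicator Eev simp: less_top[symmetric])
    also have "\<dots> = (\<Sum>S\<in>Pow A. c S * prob (E S))"
      using Eev by (simp add: Int_absorb2 sets.sets_into_space)
    finally show ?thesis .
  qed
  also have "\<dots> = (1/2)^N * (\<Sum>S\<in>Pow A. c S)"
    by (simp add: pE sum_distrib_right[symmetric] mult.commute)
  also have "(\<Sum>S\<in>Pow A. c S) = (2 ^ N - 1) / N"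
    unfolding c_def using comb_sum[OF finA nA] cardA by simp
  also have "(1/2::real)^N * ((2 ^ N - 1) / N) = (1 - (1/2)^N)/N"
    by (simp add: field_simps power_one_over)
  finally show ?thesis .
qed


lemma (in prob_space) subg_mask:
  fixes Xb :: "'k \<Rightarrow> 'a \<Rightarrow> real" and a :: "'a \<Rightarrow> bool" and v :: "'a \<Rightarrow> real"
  assumes ind: "indep_vars (\<lambda>_. borel) Xb UNIV" and k: "ka \<noteq> kb"
    and Xa: "\<And>\<omega>. Xb ka \<omega> = of_bool (a \<omega>)" and Xn: "\<And>\<omega>. Xb kb \<omega> = v \<omega>"
    and half: "{\<omega>\<in>space M. a \<omega>} \<in> events" "prob {\<omega>\<in>space M. a \<omega>} = 1/2"
    and sg: "subgaussian M v B" and B: "B \<ge> 0"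
  shows "subgaussian M (\<lambda>\<omega>. of_bool (a \<omega>) * v \<omega>) B"
  unfolding subgaussian_def
proof
  fix l :: real
  have rvXb: "Xb k \<in> borel_measurable M" for k using ind by (auto simp: indep_vars_def)
  have ma[measurable]: "(\<lambda>\<omega>. of_bool (a \<omega>) :: real) \<in> borel_measurable M"
    using rvXb[of ka] by (metis (no_types, lifting) Xa ext)
  have intv: "integrable M (\<lambda>\<omega>. exp (l * v \<omega>))" and lev: "(\<integral>\<omega>. exp (l * v \<omega>) \<partial>M) \<le> exp (l\<^sup>2 * B / 2)"
    using sg unfolding subgaussian_def by auto
  have inta: "integrable M (\<lambda>\<omega>. of_bool (a \<omega>) :: real)"
    by (rule integrable_const_bound[where B=1]) auto
  have Ea: "(\<integral>\<omega>. of_bool (a \<omega>) \<partial>M) = (1/2::real)"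
  proof -
    have "(\<integral>\<omega>. of_bool (a \<omega>) \<partial>M) = (\<integral>\<omega>. indicator {\<omega>\<in>space M. a \<omega>} \<omega> \<partial>M :: real)"
      by (rule Bochner_Integration.integral_cong) (auto simp: indicator_def)
    also have "\<dots> = prob {\<omega>\<in>space M. a \<omega>}" by (simp add: Int_absorb2)
    finally show ?thesis using half by simp
  qed
  define Y where "Y b = (if b then (\<lambda>\<omega>. of_bool (a \<omega>)) else (\<lambda>\<omega>. exp (l * v \<omega>)))" for b
  have indY: "indep_vars (\<lambda>_. borel) Y UNIV"
  proof (rule indep_blocks[OF ind, where K="\<lambda>b. if b then {ka} else {kb}"
                         and g="\<lambda>b. if b then (\<lambda>f. f ka) else (\<lambda>f. exp (l * f kb))"])
    show "disjoint_family_on (\<lambda>b. if b then {ka} else {kb}) UNIV"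
      using k by (auto simp: disjoint_family_on_def)
    fix t :: bool
    show "(if t then (\<lambda>f. f ka) else (\<lambda>f. exp (l * f kb))) \<in> borel_measurable (Pi\<^sub>M (if t then {ka} else {kb}) (\<lambda>_. borel))"
      by (cases t) (auto intro!: measurable_component_singleton borel_measurable_exp borel_measurable_times measurable_compose[OF measurable_component_singleton])
    fix x
    show "Y t x = (if t then (\<lambda>f. f ka) else (\<lambda>f. exp (l * f kb))) (\<lambda>i\<in>if t then {ka} else {kb}. Xb i x)"
      by (cases t) (simp_all add: Y_def Xa Xn)
  qed
  have intY: "integrable M (Y b)" for b by (cases b) (simp_all add: Y_def inta intv)
  have prodE: "(\<integral>\<omega>. (\<Prod>b\<in>UNIV. Y b \<omega>) \<partial>M) = (\<Prod>b\<in>UNIV. \<integral>\<omega>. Y b \<omega> \<partial>M)"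
    and prodI: "integrable M (\<lambda>\<omega>. \<Prod>b\<in>UNIV. Y b \<omega>)"
    using indep_vars_lebesgue_integral[OF _ indY intY] indep_vars_integrable[OF _ indY intY] by auto
  have P: "(\<Prod>b\<in>UNIV. Y b \<omega>) = of_bool (a \<omega>) * exp (l * v \<omega>)" for \<omega>
    by (simp add: UNIV_bool Y_def)
  have P2: "(\<Prod>b\<in>UNIV. \<integral>\<omega>. Y b \<omega> \<partial>M) = (1/2) * (\<integral>\<omega>. exp (l * v \<omega>) \<partial>M)"
    by (simp add: UNIV_bool Y_def Ea)
  have int1: "integrable M (\<lambda>\<omega>. of_bool (a \<omega>) * exp (l * v \<omega>))" using prodI by (simp add: P)
  have E1: "(\<integral>\<omega>. of_bool (a \<omega>) * exp (l * v \<omega>) \<partial>M) = (1/2) * (\<integral>\<omega>. exp (l * v \<omega>) \<partial>M)"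
    using prodE by (simp add: P P2)
  have pw: "exp (l * (of_bool (a \<omega>) * v \<omega>)) = of_bool (a \<omega>) * exp (l * v \<omega>) + (1 - of_bool (a \<omega>))" for \<omega>
    by simp
  have int2: "integrable M (\<lambda>\<omega>. of_bool (a \<omega>) * exp (l * v \<omega>) + (1 - of_bool (a \<omega>)))"
    by (intro Bochner_Integration.integrable_add Bochner_Integration.integrable_diff int1 inta) simp
  show "integrable M (\<lambda>\<omega>. exp (l * (of_bool (a \<omega>) * v \<omega>))) \<and>
        (\<integral>\<omega>. exp (l * (of_bool (a \<omega>) * v \<omega>)) \<partial>M) \<le> exp (l\<^sup>2 * B / 2)"
  proof
    show "integrable M (\<lambda>\<omega>. exp (l * (of_bool (a \<omega>) * v \<omega>)))" using int2 by (simp only: pw)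
    have "(\<integral>\<omega>. exp (l * (of_bool (a \<omega>) * v \<omega>)) \<partial>M) =
          (\<integral>\<omega>. of_bool (a \<omega>) * exp (l * v \<omega>) + (1 - of_bool (a \<omega>)) \<partial>M)" by (simp only: pw)
    also have "\<dots> = (1/2) * (\<integral>\<omega>. exp (l * v \<omega>) \<partial>M) + (1 - 1/2)"
      using int1 inta by (simp add: Bochner_Integration.integral_add Bochner_Integration.integral_diff E1 Ea prob_space)
    also have "\<dots> \<le> (1/2) * exp (l\<^sup>2 * B / 2) + (1/2) * exp (l\<^sup>2 * B / 2)"
      using lev B by (intro add_mono) (auto simp: one_le_exp_iff)
    finally show "(\<integral>\<omega>. exp (l * (of_bool (a \<omega>) * v \<omega>)) \<partial>M) \<le> exp (l\<^sup>2 * B / 2)" by simp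
  qed
qed



lemma two_gauss: "2 * (\<Sum>i\<in>{1..j}. real i) = real j * (real j + 1)"
  by (induction j) (simp_all add: algebra_simps atLeastAtMostSuc_conv)

lemma dev_lemma: "(T::real) > 0 \<Longrightarrow> \<bar>x - T*m\<bar> < T*\<delta> \<Longrightarrow> \<bar>x/T - m\<bar> < \<delta>"
proof -
  assume T: "T > 0" and h: "\<bar>x - T*m\<bar> < T*\<delta>"
  have "x/T - m = (x - T*m)/T" using T by (simp add: field_simps)
  hence "\<bar>x/T - m\<bar> = \<bar>x - T*m\<bar>/T" using T by simp
  also have "\<dots> < \<delta>" using T h by (simp add: divide_less_eq mult.commute)
  finally show ?thesis .
qed

lemma agent_bound:
  fixes P :: "'a measure" and N M :: nat and U :: "nat \<Rightarrow> nat \<Rightarrow> real" and b :: real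
    and nu :: "nat \<Rightarrow> nat \<Rightarrow> nat \<Rightarrow> nat \<Rightarrow> 'a \<Rightarrow> real"
    and acc :: "nat \<Rightarrow> nat \<Rightarrow> nat \<Rightarrow> 'a \<Rightarrow> bool"
  assumes PS: "prob_space P" and N: "1 \<le> N" and n: "n \<in> {1..N}" and u: "0 < U n 1"
    and sg: "\<forall>n i k s. subgaussian P (nu n i k s) b"
    and half: "\<forall>n i s. {\<omega>\<in>space P. acc n i s \<omega>} \<in> sets P \<and> measure P {\<omega>\<in>space P. acc n i s \<omega>} = 1/2"
    and ind: "prob_space.indep_vars P (\<lambda>_. borel)
           (\<lambda>x \<omega>. case x of Inl (n, i, k, s) \<Rightarrow> nu n i k s \<omega>
                          | Inr (n, i, s) \<Rightarrow> of_bool (acc n i s \<omega>)) UNIV"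
  shows "\<exists>c>0. \<exists>D. \<forall>j\<ge>1. D j \<in> sets P \<and> {\<omega>\<in>space P. \<not> est_correct N M U nu acc n j \<omega>} \<subseteq> D j
            \<and> measure P (D j) \<le> 8 * exp (- c * (real j ^ 2 / 2))"
proof -
  interpret prob_space P by (rule PS)
  define Xb where "Xb = (\<lambda>x \<omega>. case x of Inl (n, i, k, s) \<Rightarrow> nu n i k s \<omega>
                          | Inr (n, i, s) \<Rightarrow> of_bool (acc n i s \<omega>))"
  have indX: "indep_vars (\<lambda>_. borel) Xb UNIV" using ind by (simp add: Xb_def case_prod_beta)
  define B where "B = max b 1"
  have B: "B > 0" by (simp add: B_def)
  have sgB: "subgaussian P (nu n' i k s) B" for n' i k s
    using sg subgaussian_mono[of P _ b B] by (auto simp: B_def)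
  define u where "u = U n 1"
  define \<mu> where "\<mu> = (1 - (1/2)^N) / N"
  obtain \<delta> where \<delta>: "\<delta> > 0" and \<delta>P: "\<And>e1 e2 a d. \<bar>e1\<bar> < \<delta> \<Longrightarrow> \<bar>e2\<bar> < \<delta> \<Longrightarrow> \<bar>a - \<mu>\<bar> < \<delta> \<Longrightarrow> \<bar>d - 1/2\<bar> < \<delta> \<Longrightarrow>
     0 < 1 - ((u*a+e2)/d) / (2*(u/N+e1)) \<and> \<bar>ln (1 - ((u*a+e2)/d) / (2*(u/N+e1))) / ln (1/2) - N\<bar> < 1/2"
    using det_cont[OF u N] unfolding u_def \<mu>_def by blast
  define c where "c = min (\<delta>\<^sup>2/(2*B)) (2*\<delta>\<^sup>2)"
  have c: "c > 0" using \<delta> B by (simp add: c_def)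
  define S where "S j = (SIGMA i:{1..j}. {1..i})" for j :: nat
  define T where "T j = real (card (S j))" for j
  have finS: "finite (S j)" for j by (simp add: S_def)
  have T_eq: "T j = (\<Sum>i\<in>{1..j}. real i)" for j
    by (simp add: T_def S_def card_SigmaI)
  have T_ge: "T j \<ge> real j ^ 2 / 2" for j
    using two_gauss[of j] by (simp add: T_eq power2_eq_square algebra_simps)
  have Sne: "S j \<noteq> {}" if "j \<ge> 1" for j
  proof -
    have "(1,1) \<in> S j" using that by (simp add: S_def)
    thus ?thesis by auto
  qed
  have Tpos: "T j > 0" if "j \<ge> 1" for j using Sne[OF that] finS[of j] by (simp add: T_def card_gt_0_iff)

  define Z1 where "Z1 p \<omega> = nu n (fst p) 1 (snd p) \<omega>" for p :: "nat \<times> nat" and \<omega>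
  define Z2 where "Z2 p \<omega> = of_bool (acc n (fst p) (snd p) \<omega>) * nu n (fst p) (Suc M) (snd p) \<omega>" for p :: "nat \<times> nat" and \<omega>
  define Z3 where "Z3 p \<omega> = of_bool (acc n (fst p) (snd p) \<omega>) / real (card {m\<in>{1..N}. acc m (fst p) (snd p) \<omega>})" for p :: "nat \<times> nat" and \<omega>
  define Z4 where "Z4 p \<omega> = (of_bool (acc n (fst p) (snd p) \<omega>) :: real)" for p :: "nat \<times> nat" and \<omega>

  have ind1: "indep_vars (\<lambda>_. borel) Z1 UNIV"
    by (rule indep_blocks[OF indX, where K="\<lambda>p. {Inl (n, fst p, 1, snd p)}" and g="\<lambda>p f. f (Inl (n, fst p, 1, snd p))"])
       (auto simp: disjoint_family_on_def Z1_def Xb_def case_prod_beta intro!: measurable_component_singleton)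
  have ind2: "indep_vars (\<lambda>_. borel) Z2 UNIV"
    by (rule indep_blocks[OF indX, where K="\<lambda>p. {Inr (n, fst p, snd p), Inl (n, fst p, Suc M, snd p)}"
          and g="\<lambda>p f. f (Inr (n, fst p, snd p)) * f (Inl (n, fst p, Suc M, snd p))"])
       (auto simp: disjoint_family_on_def Z2_def Xb_def case_prod_beta intro!: borel_measurable_times measurable_component_singleton)
  have ind3: "indep_vars (\<lambda>_. borel) Z3 UNIV"
  proof (rule indep_blocks[OF indX, where K="\<lambda>p. (\<lambda>m. Inr (m, fst p, snd p)) ` {1..N}"
          and g="\<lambda>p f. f (Inr (n, fst p, snd p)) / (\<Sum>m\<in>{1..N}. f (Inr (m, fst p, snd p)))"])
    show "disjoint_family_on (\<lambda>p. (\<lambda>m. Inr (m, fst p, snd p)) ` {1..N}) UNIV"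
      by (auto simp: disjoint_family_on_def prod_eq_iff)
    fix p :: "nat \<times> nat"
    show "(\<lambda>f::_ \<Rightarrow> real. f (Inr (n, fst p, snd p)) / (\<Sum>m\<in>{1..N}. f (Inr (m, fst p, snd p))))
          \<in> borel_measurable (Pi\<^sub>M ((\<lambda>m. Inr (m, fst p, snd p)) ` {1..N}) (\<lambda>_. borel))"
      apply (rule borel_measurable_divide)
      apply (rule measurable_component_singleton[where M="\<lambda>_. borel"])
      apply (use n in simp)
      apply (rule borel_measurable_sum)
      apply (rule measurable_component_singleton[where M="\<lambda>_. borel"])
      apply auto
      done
    fix \<omega>
    have "(\<Sum>m\<in>{1..N}. (\<lambda>i\<in>(\<lambda>m. Inr (m, fst p, snd p)) ` {1..N}. Xb i \<omega>) (Inr (m, fst p, snd p)))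
          = (\<Sum>m\<in>{1..N}. (of_bool (acc m (fst p) (snd p) \<omega>) :: real))"
      by (intro sum.cong refl) (auto simp: Xb_def case_prod_beta)
    also have "\<dots> = real (card {m\<in>{1..N}. acc m (fst p) (snd p) \<omega>})"
      by (subst sum_of_bool_eq) (auto intro!: arg_cong[where f=card])
    finally show "Z3 p \<omega> = (\<lambda>f. f (Inr (n, fst p, snd p)) / (\<Sum>m\<in>{1..N}. f (Inr (m, fst p, snd p))))
          (\<lambda>i\<in>(\<lambda>m. Inr (m, fst p, snd p)) ` {1..N}. Xb i \<omega>)"
      using n by (simp add: Z3_def Xb_def case_prod_beta)
  qed
  have ind4: "indep_vars (\<lambda>_. borel) Z4 UNIV"
    by (rule indep_blocks[OF indX, where K="\<lambda>p. {Inr (n, fst p, snd p)}" and g="\<lambda>p f. f (Inr (n, fst p, snd p))"])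
       (auto simp: disjoint_family_on_def Z4_def Xb_def case_prod_beta intro!: measurable_component_singleton)
  have m1[measurable]: "Z1 p \<in> borel_measurable P" for p using ind1 unfolding indep_vars_def by blast
  have m2[measurable]: "Z2 p \<in> borel_measurable P" for p using ind2 unfolding indep_vars_def by blast
  have m3[measurable]: "Z3 p \<in> borel_measurable P" for p using ind3 unfolding indep_vars_def by blast
  have m4[measurable]: "Z4 p \<in> borel_measurable P" for p using ind4 unfolding indep_vars_def by blast

  have sg1: "subgaussian P (Z1 p) B" for p
    using sgB by (simp add: Z1_def[abs_def])
  have sg2: "subgaussian P (Z2 p) B" for p
  proof -
    have "subgaussian P (\<lambda>\<omega>. of_bool (acc n (fst p) (snd p) \<omega>) * nu n (fst p) (Suc M) (snd p) \<omega>) B"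
      by (rule subg_mask[OF indX, where ka="Inr (n, fst p, snd p)" and kb="Inl (n, fst p, Suc M, snd p)"
            and a="acc n (fst p) (snd p)" and v="nu n (fst p) (Suc M) (snd p)"])
         (simp_all add: Xb_def case_prod_beta half sgB less_imp_le[OF B])
    thus ?thesis by (simp add: Z2_def[abs_def])
  qed
  have E3: "expectation (Z3 p) = \<mu>" for p
  proof -
    have "expectation (\<lambda>\<omega>. of_bool (acc n (fst p) (snd p) \<omega>) / real (card {m\<in>{1..N}. acc m (fst p) (snd p) \<omega>})) = \<mu>"
      unfolding \<mu>_def
      by (rule exp_share[OF indX, where key="\<lambda>m. Inr (m, fst p, snd p)" and acc="\<lambda>m. acc m (fst p) (snd p)"
            and N=N and n=n])
         (insert N n, simp_all add: Xb_def case_prod_beta half inj_def)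
    thus ?thesis by (simp add: Z3_def[abs_def])
  qed
  have E4: "expectation (Z4 p) = 1/2" for p
  proof -
    have "expectation (Z4 p) = (\<integral>\<omega>. indicator {\<omega>\<in>space P. acc n (fst p) (snd p) \<omega>} \<omega> \<partial>P :: real)"
      by (rule Bochner_Integration.integral_cong) (auto simp: indicator_def Z4_def)
    also have "\<dots> = prob {\<omega>\<in>space P. acc n (fst p) (snd p) \<omega>}" by (simp add: Int_absorb2)
    finally show ?thesis using half by simp
  qed
  have bnd3: "AE x in P. Z3 p x \<in> {0..1}" for p
  proof (rule AE_I2)
    fix x
    show "Z3 p x \<in> {0..1}"
    proof (cases "acc n (fst p) (snd p) x")
      case True
      have fin: "finite {m\<in>{1..N}. acc m (fst p) (snd p) x}" by simp
      have "n \<in> {m\<in>{1..N}. acc m (fst p) (snd p) x}" using n True by simp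
      hence "card {m\<in>{1..N}. acc m (fst p) (snd p) x} > 0" using fin by (simp add: card_gt_0_iff) blast
      hence "real (card {m\<in>{1..N}. acc m (fst p) (snd p) x}) \<ge> 1" by linarith
      thus ?thesis using True by (simp add: Z3_def)
    qed (simp add: Z3_def)
  qed
  have bnd4: "AE x in P. Z4 p x \<in> {0..1}" for p by (rule AE_I2) (simp add: Z4_def)

  define D1 where "D1 j = {\<omega>\<in>space P. \<bar>\<Sum>p\<in>S j. Z1 p \<omega>\<bar> \<ge> T j * \<delta>}" for j
  define D2 where "D2 j = {\<omega>\<in>space P. \<bar>\<Sum>p\<in>S j. Z2 p \<omega>\<bar> \<ge> T j * \<delta>}" for j
  define D3 where "D3 j = {\<omega>\<in>space P. \<bar>(\<Sum>p\<in>S j. Z3 p \<omega>) - card (S j) * \<mu>\<bar> \<ge> T j * \<delta>}" for j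
  define D4 where "D4 j = {\<omega>\<in>space P. \<bar>(\<Sum>p\<in>S j. Z4 p \<omega>) - card (S j) * (1/2)\<bar> \<ge> T j * \<delta>}" for j
  define D where "D j = D1 j \<union> D2 j \<union> D3 j \<union> D4 j" for j
  have D1m: "D1 j \<in> events" for j unfolding D1_def by measurable
  have D2m: "D2 j \<in> events" for j unfolding D2_def by measurable
  have D3m: "D3 j \<in> events" for j unfolding D3_def by measurable
  have D4m: "D4 j \<in> events" for j unfolding D4_def by measurable
  have Dm: "D j \<in> events" for j unfolding D_def using D1m D2m D3m D4m by auto

  have ec: "exp (- c * T j) \<le> exp (- c * (real j ^ 2 / 2))" for j
    using T_ge[of j] c by simp
  have pD1: "prob (D1 j) \<le> 2 * exp (- c * (real j ^ 2 / 2))" if j: "j \<ge> 1" for j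
  proof -
    have "prob (D1 j) \<le> 2 * exp (-(T j * \<delta>)\<^sup>2/(2*B*card (S j)))"
      unfolding D1_def
      by (rule subg_sum_abs[OF finS indep_vars_subset[OF ind1] sg1 B Sne[OF j]])
         (use Tpos[OF j] \<delta> in auto)
    also have "-(T j * \<delta>)\<^sup>2/(2*B*card (S j)) = - (\<delta>\<^sup>2/(2*B)) * T j"
      using Tpos[OF j] B by (simp add: T_def power2_eq_square field_simps)
    also have "\<dots> \<le> - c * T j" using Tpos[OF j] by (intro mult_right_mono) (auto simp: c_def)
    finally have h: "prob (D1 j) \<le> 2 * exp (- c * T j)" by simp
    show ?thesis using h ec[of j] by linarith
  qed
  have pD2: "prob (D2 j) \<le> 2 * exp (- c * (real j ^ 2 / 2))" if j: "j \<ge> 1" for j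
  proof -
    have "prob (D2 j) \<le> 2 * exp (-(T j * \<delta>)\<^sup>2/(2*B*card (S j)))"
      unfolding D2_def
      by (rule subg_sum_abs[OF finS indep_vars_subset[OF ind2] sg2 B Sne[OF j]])
         (use Tpos[OF j] \<delta> in auto)
    also have "-(T j * \<delta>)\<^sup>2/(2*B*card (S j)) = - (\<delta>\<^sup>2/(2*B)) * T j"
      using Tpos[OF j] B by (simp add: T_def power2_eq_square field_simps)
    also have "\<dots> \<le> - c * T j" using Tpos[OF j] by (intro mult_right_mono) (auto simp: c_def)
    finally have h: "prob (D2 j) \<le> 2 * exp (- c * T j)" by simp
    show ?thesis using h ec[of j] by linarith
  qed
  have pD3: "prob (D3 j) \<le> 2 * exp (- c * (real j ^ 2 / 2))" if j: "j \<ge> 1" for j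
  proof -
    have "prob (D3 j) \<le> 2 * exp (-2*(T j * \<delta>)\<^sup>2/card (S j))"
      unfolding D3_def
      by (rule hoeff_abs[OF finS Sne[OF j] indep_vars_subset[OF ind3] bnd3 E3])
         (use Tpos[OF j] \<delta> in auto)
    also have "-2*(T j * \<delta>)\<^sup>2/card (S j) = - (2*\<delta>\<^sup>2) * T j"
      using Tpos[OF j] by (simp add: T_def power2_eq_square field_simps)
    also have "\<dots> \<le> - c * T j" using Tpos[OF j] by (intro mult_right_mono) (auto simp: c_def)
    finally have h: "prob (D3 j) \<le> 2 * exp (- c * T j)" by simp
    show ?thesis using h ec[of j] by linarith
  qed
  have pD4: "prob (D4 j) \<le> 2 * exp (- c * (real j ^ 2 / 2))" if j: "j \<ge> 1" for j
  proof -
    have "prob (D4 j) \<le> 2 * exp (-2*(T j * \<delta>)\<^sup>2/card (S j))"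
      unfolding D4_def
      by (rule hoeff_abs[OF finS Sne[OF j] indep_vars_subset[OF ind4] bnd4 E4])
         (use Tpos[OF j] \<delta> in auto)
    also have "-2*(T j * \<delta>)\<^sup>2/card (S j) = - (2*\<delta>\<^sup>2) * T j"
      using Tpos[OF j] by (simp add: T_def power2_eq_square field_simps)
    also have "\<dots> \<le> - c * T j" using Tpos[OF j] by (intro mult_right_mono) (auto simp: c_def)
    finally have h: "prob (D4 j) \<le> 2 * exp (- c * T j)" by simp
    show ?thesis using h ec[of j] by linarith
  qed
  have pD: "prob (D j) \<le> 8 * exp (- c * (real j ^ 2 / 2))" if j: "j \<ge> 1" for j
  proof -
    have "prob (D j) \<le> prob (D1 j \<union> D2 j \<union> D3 j) + prob (D4 j)"
      unfolding D_def using D1m D2m D3m D4m by (intro measure_subadditive emeasure_finite) auto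
    also have "prob (D1 j \<union> D2 j \<union> D3 j) \<le> prob (D1 j \<union> D2 j) + prob (D3 j)"
      using D1m D2m D3m D4m by (intro measure_subadditive emeasure_finite) auto
    also have "prob (D1 j \<union> D2 j) \<le> prob (D1 j) + prob (D2 j)"
      using D1m D2m D3m D4m by (intro measure_subadditive emeasure_finite) auto
    finally show ?thesis using pD1[OF j] pD2[OF j] pD3[OF j] pD4[OF j] by simp
  qed

  have incl: "{\<omega>\<in>space P. \<not> est_correct N M U nu acc n j \<omega>} \<subseteq> D j" if j: "j \<ge> 1" for j
  proof (rule subsetI, rule ccontr)
    fix \<omega> assume w: "\<omega> \<in> {\<omega>\<in>space P. \<not> est_correct N M U nu acc n j \<omega>}" and nD: "\<omega> \<notin> D j"
    have sp: "\<omega> \<in> space P" and ne: "\<not> est_correct N M U nu acc n j \<omega>" using w by auto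
    define T' where "T' = T j"
    have T'pos: "T' > 0" using Tpos[OF j] by (simp add: T'_def)
    have cardS: "real (card (S j)) = T'" by (simp add: T'_def T_def)
    define s1 where "s1 = (\<Sum>p\<in>S j. Z1 p \<omega>)"
    define s2 where "s2 = (\<Sum>p\<in>S j. Z2 p \<omega>)"
    define s3 where "s3 = (\<Sum>p\<in>S j. Z3 p \<omega>)"
    define s4 where "s4 = (\<Sum>p\<in>S j. Z4 p \<omega>)"
    have h1: "\<bar>s1 - T' * 0\<bar> < T' * \<delta>" using nD sp by (auto simp: D_def D1_def s1_def T'_def)
    have h2: "\<bar>s2 - T' * 0\<bar> < T' * \<delta>" using nD sp by (auto simp: D_def D2_def s2_def T'_def)
    have h3: "\<bar>s3 - T' * \<mu>\<bar> < T' * \<delta>" using nD sp cardS by (auto simp: D_def D3_def s3_def T'_def)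
    have h4: "\<bar>s4 - T' * (1/2)\<bar> < T' * \<delta>" using nD sp cardS by (auto simp: D_def D4_def s4_def T'_def)
    have e1: "\<bar>s1/T'\<bar> < \<delta>" using dev_lemma[OF T'pos h1] by simp
    have e2: "\<bar>s2/T'\<bar> < \<delta>" using dev_lemma[OF T'pos h2] by simp
    have e3: "\<bar>s3/T' - \<mu>\<bar> < \<delta>" using dev_lemma[OF T'pos h3] by simp
    have e4: "\<bar>s4/T' - 1/2\<bar> < \<delta>" using dev_lemma[OF T'pos h4] by simp
    have I1: "U_hat N U nu n 1 j \<omega> = u/N + s1/T'"
    proof -
      have "(\<Sum>i\<in>{1..j}. \<Sum>s\<in>{1..i}. U n 1 / real N + nu n i 1 s \<omega>) = (\<Sum>p\<in>S j. u / real N + Z1 p \<omega>)"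
        unfolding S_def by (subst sum.Sigma) (auto simp: Z1_def u_def case_prod_beta)
      also have "\<dots> = T' * (u / real N) + s1"
        by (simp add: sum.distrib s1_def cardS)
      finally have num: "(\<Sum>i\<in>{1..j}. \<Sum>s\<in>{1..i}. U n 1 / real N + nu n i 1 s \<omega>) = T' * (u / real N) + s1" .
      have den: "(\<Sum>i\<in>{1..j}. real i) = T'" by (simp add: T'_def T_eq)
      show ?thesis unfolding U_hat_def num den using T'pos by (simp add: field_simps)
    qed
    have I2: "r_bar N M U nu acc n j \<omega> = (u*(s3/T') + s2/T') / (s4/T')"
    proof -
      have AS: "acc_steps acc n j \<omega> = {p\<in>S j. acc n (fst p) (snd p) \<omega>}"
        by (auto simp: acc_steps_def S_def)
      have "(\<Sum>(i,s)\<in>acc_steps acc n j \<omega>. U n 1 / real (load1 N acc i s \<omega>) + nu n i (Suc M) s \<omega>)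
            = (\<Sum>p\<in>S j. if acc n (fst p) (snd p) \<omega> then U n 1 / real (load1 N acc (fst p) (snd p) \<omega>) + nu n (fst p) (Suc M) (snd p) \<omega> else 0)"
        unfolding AS by (subst sum.inter_filter[OF finS]) (intro sum.cong refl, simp add: split_beta)
      also have "\<dots> = (\<Sum>p\<in>S j. u * Z3 p \<omega> + Z2 p \<omega>)"
        by (intro sum.cong refl) (simp add: Z2_def Z3_def u_def load1_def)
      also have "\<dots> = u * s3 + s2" by (simp add: sum.distrib sum_distrib_left s2_def s3_def)
      finally have num: "(\<Sum>(i,s)\<in>acc_steps acc n j \<omega>. U n 1 / real (load1 N acc i s \<omega>) + nu n i (Suc M) s \<omega>) = u * s3 + s2" .
      have "real (card (acc_steps acc n j \<omega>)) = (\<Sum>p\<in>S j. (of_bool (acc n (fst p) (snd p) \<omega>) :: real))"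
        unfolding AS using finS[of j] by (subst sum_of_bool_eq) (auto intro!: arg_cong[where f="\<lambda>X. real (card X)"] arg_cong[where f=card])
      hence den: "real (card (acc_steps acc n j \<omega>)) = s4" by (simp add: s4_def Z4_def)
      have "(u*(s3/T') + s2/T') / (s4/T') = (u * s3 + s2) / s4"
        using T'pos by (cases "s4 = 0") (auto simp: field_simps)
      thus ?thesis unfolding r_bar_def num den by (rule sym)
    qed
    have "0 < 1 - ((u*(s3/T')+s2/T')/(s4/T')) / (2*(u/N+s1/T')) \<and>
          \<bar>ln (1 - ((u*(s3/T')+s2/T')/(s4/T')) / (2*(u/N+s1/T'))) / ln (1/2) - N\<bar> < 1/2"
      by (rule \<delta>P[OF e1 e2 e3 e4])
    hence "est_correct N M U nu acc n j \<omega>"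
      unfolding est_correct_def N_est_def N_arg_def I1 I2 by simp
    thus False using ne by simp
  qed
  show ?thesis
    using c Dm incl pD by blast
qed


lemma expO:
  fixes c :: real assumes c: "c > 0"
  shows "(\<lambda>j::nat. 8 * exp (- c * (real j ^ 2 / 2))) \<in> O(\<lambda>j. exp (- (real j powr (7/5))))"
proof -
  have "(\<lambda>j::nat. real j powr (7/5)) \<in> o(\<lambda>j. real j ^ 2)" by real_asymp
  from landau_o.smallD[OF this, of "c/2"] c
  have ev: "eventually (\<lambda>j::nat. norm (real j powr (7/5)) \<le> c/2 * norm (real j ^ 2)) at_top" by simp
  show ?thesis
  proof (rule bigoI[where c=8])
    show "eventually (\<lambda>j::nat. norm (8 * exp (- c * (real j ^ 2 / 2))) \<le> 8 * norm (exp (- (real j powr (7/5))))) at_top"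
      using ev
    proof eventually_elim
      case (elim j)
      hence "real j powr (7/5) \<le> c * (real j ^ 2 / 2)" by simp
      thus ?case by simp
    qed
  qed
qed

theorem lemma5:
  fixes P :: "'a measure" and N M :: nat and U :: "nat \<Rightarrow> nat \<Rightarrow> real" and Umax b :: real
    and nu :: "nat \<Rightarrow> nat \<Rightarrow> nat \<Rightarrow> nat \<Rightarrow> 'a \<Rightarrow> real"
    and acc :: "nat \<Rightarrow> nat \<Rightarrow> nat \<Rightarrow> 'a \<Rightarrow> bool"
  assumes "prob_space P"
    and "1 \<le> M" and "1 \<le> N"
    and "\<forall>n\<in>{1..N}. \<forall>m\<in>{1..M}. 0 \<le> U n m \<and> U n m \<le> Umax"
    and "\<forall>n\<in>{1..N}. 0 < U n 1"
    and "\<forall>n i k s. nu n i k s \<in> borel_measurable P"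
    and "\<forall>n i k s n' i' k' s'. distr P borel (nu n i k s) = distr P borel (nu n' i' k' s')"
    and "\<forall>n i k s. integrable P (nu n i k s) \<and> (\<integral>\<omega>. nu n i k s \<omega> \<partial>P) = 0"
    and "\<forall>n i k s. subgaussian P (nu n i k s) b"
    and "\<forall>n i s. {\<omega>\<in>space P. acc n i s \<omega>} \<in> sets P \<and> measure P {\<omega>\<in>space P. acc n i s \<omega>} = 1/2"
    and "prob_space.indep_vars P (\<lambda>_. borel)
           (\<lambda>x \<omega>. case x of Inl (n, i, k, s) \<Rightarrow> nu n i k s \<omega>
                          | Inr (n, i, s) \<Rightarrow> of_bool (acc n i s \<omega>)) UNIV"
  shows "(\<lambda>j. measure P {\<omega>\<in>space P. \<exists>n\<in>{1..N}. \<not> est_correct N M U nu acc n j \<omega>})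
           \<in> O(\<lambda>j. exp (- (real j powr (7/5))))"
proof -
  interpret prob_space P by (rule assms(1))
  define A where "A = {1..N}"
  have finA: "finite A" by (simp add: A_def)
  have "\<forall>n\<in>A. \<exists>c>0. \<exists>D. \<forall>j\<ge>1. D j \<in> sets P \<and> {\<omega>\<in>space P. \<not> est_correct N M U nu acc n j \<omega>} \<subseteq> D j
            \<and> measure P (D j) \<le> 8 * exp (- c * (real j ^ 2 / 2))"
  proof
    fix n assume n: "n \<in> A"
    show "\<exists>c>0. \<exists>D. \<forall>j\<ge>1. D j \<in> sets P \<and> {\<omega>\<in>space P. \<not> est_correct N M U nu acc n j \<omega>} \<subseteq> D j
            \<and> measure P (D j) \<le> 8 * exp (- c * (real j ^ 2 / 2))"
    proof -
      have n': "n \<in> {1..N}" using n by (simp add: A_def)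
      have un: "0 < U n 1" using assms(5) n' by blast
      show ?thesis by (rule agent_bound[where P=P and N=N and n=n and U=U and nu=nu and acc=acc and b=b and M=M, OF assms(1) assms(3) n' un assms(9) assms(10) assms(11)])
    qed
  qed
  hence "\<exists>c. \<forall>n\<in>A. c n > 0 \<and> (\<exists>D. \<forall>j\<ge>1. D j \<in> sets P \<and> {\<omega>\<in>space P. \<not> est_correct N M U nu acc n j \<omega>} \<subseteq> D j
            \<and> measure P (D j) \<le> 8 * exp (- c n * (real j ^ 2 / 2)))"
    by (rule bchoice)
  then obtain c where c: "\<forall>n\<in>A. c n > 0 \<and> (\<exists>D. \<forall>j\<ge>1. D j \<in> sets P \<and> {\<omega>\<in>space P. \<not> est_correct N M U nu acc n j \<omega>} \<subseteq> D j
            \<and> measure P (D j) \<le> 8 * exp (- c n * (real j ^ 2 / 2)))"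
    by blast
  hence "\<exists>D. \<forall>n\<in>A. \<forall>j\<ge>1. D n j \<in> sets P \<and> {\<omega>\<in>space P. \<not> est_correct N M U nu acc n j \<omega>} \<subseteq> D n j
            \<and> measure P (D n j) \<le> 8 * exp (- c n * (real j ^ 2 / 2))"
    by (intro bchoice) blast
  then obtain D where D: "\<forall>n\<in>A. \<forall>j\<ge>1. D n j \<in> sets P \<and> {\<omega>\<in>space P. \<not> est_correct N M U nu acc n j \<omega>} \<subseteq> D n j
            \<and> measure P (D n j) \<le> 8 * exp (- c n * (real j ^ 2 / 2))"
    by blast
  define g where "g j = (\<Sum>n\<in>A. 8 * exp (- c n * (real j ^ 2 / 2)))" for j :: nat
  have le: "measure P {\<omega>\<in>space P. \<exists>n\<in>{1..N}. \<not> est_correct N M U nu acc n j \<omega>} \<le> g j" if j: "j \<ge> 1" for j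
  proof -
    have Ds: "D n j \<in> sets P" if "n \<in> A" for n using D that j by blast
    have "{\<omega>\<in>space P. \<exists>n\<in>{1..N}. \<not> est_correct N M U nu acc n j \<omega>} \<subseteq> (\<Union>n\<in>A. D n j)"
      using D j unfolding A_def by blast
    hence "measure P {\<omega>\<in>space P. \<exists>n\<in>{1..N}. \<not> est_correct N M U nu acc n j \<omega>} \<le> measure P (\<Union>n\<in>A. D n j)"
      using Ds finA by (intro finite_measure_mono) auto
    also have "\<dots> \<le> (\<Sum>n\<in>A. measure P (D n j))"
      using Ds finA by (intro measure_subadditive_finite emeasure_finite) auto
    also have "\<dots> \<le> g j" unfolding g_def using D j by (intro sum_mono) blast
    finally show ?thesis .
  qed
  have gO: "g \<in> O(\<lambda>j. exp (- (real j powr (7/5))))"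
    unfolding g_def[abs_def] by (rule big_sum_in_bigo) (use c expO in blast)
  have "(\<lambda>j. measure P {\<omega>\<in>space P. \<exists>n\<in>{1..N}. \<not> est_correct N M U nu acc n j \<omega>}) \<in> O(g)"
  proof (rule landau_o.big_mono)
    show "\<forall>\<^sub>F j in at_top. norm (measure P {\<omega>\<in>space P. \<exists>n\<in>{1..N}. \<not> est_correct N M U nu acc n j \<omega>}) \<le> norm (g j)"
      unfolding eventually_at_top_linorder
    proof (intro exI[of _ 1] allI impI)
      fix j :: nat assume j: "j \<ge> 1"
      have "0 \<le> g j" unfolding g_def by (intro sum_nonneg) simp
      thus "norm (measure P {\<omega>\<in>space P. \<exists>n\<in>{1..N}. \<not> est_correct N M U nu acc n j \<omega>}) \<le> norm (g j)"
        using le[OF j] by simp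
    qed
  qed
  thus ?thesis using gO by (rule landau_o.big_trans)
qed


end
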